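(* Let $f\in\mathbb{Z}_2[x]$, $n\ge2$, and let $\sigma=(x_1,\dots,x_k)$ be a growing $k$-cycle of $f_n$, with representatives $x_i\in\mathbb{Z}_2$. Put $a_n(x)=(f^k)'(x)$, $b_n(x)=(f^k(x)-x)/2^n$, $a_{n+1}(x)=(f^{2k})'(x)$, $b_{n+1}(x)=(f^{2k}(x)-x)/2^{n+1}$. Then for all $1\le i\le k$ and $t\in\{0,1\}$, $$a_{n+1}(x_i)\equiv1\pmod4,\qquad 2\,b_{n+1}(x_i+2^nt)\equiv b_n(x_i)\big(1+a_n(x_i)\big)\pmod4.$$
   Context: $f_n$ is the induced map on $\mathbb{Z}/2^n\mathbb{Z}$, $f_n(x\bmod 2^n)=f(x)\bmod 2^n$. A $k$-cycle of $f_n$ is a tuple of distinct elements $x_1,\dots,x_k$ with $f_n(x_i)=x_{i+1}$, $f_n(x_k)=x_1$; it grows if $\{y\in\mathbb{Z}/2^{n+1}\mathbb{Z}:y\bmod 2^n\in\sigma\}$ is a single cycle of $f_{n+1}$, of length $2k$. *)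

theory Defs
  imports "HOL-Computational_Algebra.Polynomial"
begin

text \<open>A 2-adic integer is a compatible sequence of residues: its m-th component
is its residue modulo 2^m, normalised into {0..<2^m}.\<close>

typedef padic2 = "{x :: nat \<Rightarrow> int. \<forall>m. x (Suc m) mod 2 ^ m = x m}"
  morphisms digits Abs_padic2
  by (rule exI[of _ "\<lambda>_. 0"]) simp

setup_lifting type_definition_padic2

lemma padic2_inv_norm:
  assumes "\<forall>m. x (Suc m) mod (2::int) ^ m = x m"
  shows "x m mod 2 ^ m = x m"
proof -
  have "x m = x (Suc m) mod 2 ^ m" using assms by simp
  then show ?thesis by simp
qed

lemma padic2_mod_step: "(a::int) mod 2 ^ Suc m mod 2 ^ m = a mod 2 ^ m"
  by (simp add: mod_mod_cancel)

instantiation padic2 :: comm_ring_1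
begin

lift_definition zero_padic2 :: padic2 is "\<lambda>m. 0" by simp
lift_definition one_padic2 :: padic2 is "\<lambda>m. 1 mod 2 ^ m" using padic2_mod_step by blast
lift_definition plus_padic2 :: "padic2 \<Rightarrow> padic2 \<Rightarrow> padic2"
  is "\<lambda>x y m. (x m + y m) mod 2 ^ m"
  by (metis mod_add_eq padic2_mod_step)
lift_definition uminus_padic2 :: "padic2 \<Rightarrow> padic2"
  is "\<lambda>x m. (- x m) mod 2 ^ m"
  by (metis mod_minus_eq padic2_mod_step)
lift_definition minus_padic2 :: "padic2 \<Rightarrow> padic2 \<Rightarrow> padic2"
  is "\<lambda>x y m. (x m - y m) mod 2 ^ m"
  by (metis mod_diff_eq padic2_mod_step)
lift_definition times_padic2 :: "padic2 \<Rightarrow> padic2 \<Rightarrow> padic2"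
  is "\<lambda>x y m. (x m * y m) mod 2 ^ m"
  by (metis mod_mult_eq padic2_mod_step)

instance
proof
  fix a b c :: padic2
  show "a + b + c = a + (b + c)"
    by transfer (simp add: mod_simps add.assoc)
  show "a + b = b + a"
    by transfer (simp add: add.commute)
  show "0 + a = a"
    by transfer (simp add: padic2_inv_norm)
  show "- a + a = 0"
    by transfer (simp add: mod_simps)
  show "a - b = a + - b"
    by transfer (simp add: mod_simps)
  show "a * b * c = a * (b * c)"
    by transfer (simp add: mod_simps mult.assoc)
  show "a * b = b * a"
    by transfer (simp add: mult.commute)
  show "1 * a = a"
    proof transfer
    fix a :: "nat \<Rightarrow> int"
    assume h: "\<forall>m. a (Suc m) mod 2 ^ m = a m"
    show "(\<lambda>m. 1 mod 2 ^ m * a m mod 2 ^ m) = a"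
    proof
      fix m
      have "1 mod 2 ^ m * a m mod 2 ^ m = (1 * a m) mod (2::int) ^ m"
        by (rule mod_mult_left_eq)
      then show "1 mod 2 ^ m * a m mod 2 ^ m = a m"
        using padic2_inv_norm[OF h] by simp
    qed
  qed
  show "(a + b) * c = a * c + b * c"
    proof transfer
    fix a b c :: "nat \<Rightarrow> int"
    show "(\<lambda>m. (a m + b m) mod 2 ^ m * c m mod 2 ^ m) =
      (\<lambda>m. (a m * c m mod 2 ^ m + b m * c m mod 2 ^ m) mod 2 ^ m)"
    proof
      fix m
      have "(a m + b m) mod 2 ^ m * c m mod 2 ^ m = ((a m + b m) * c m) mod (2::int) ^ m"
        by (rule mod_mult_left_eq)
      also have "\<dots> = (a m * c m + b m * c m) mod 2 ^ m"
        by (simp add: distrib_right)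
      also have "\<dots> = (a m * c m mod 2 ^ m + b m * c m mod 2 ^ m) mod 2 ^ m"
        by (rule mod_add_eq[symmetric])
      finally show "(a m + b m) mod 2 ^ m * c m mod 2 ^ m =
        (a m * c m mod 2 ^ m + b m * c m mod 2 ^ m) mod 2 ^ m" .
    qed
  qed
  show "(0::padic2) \<noteq> 1"
    by transfer (auto simp: fun_eq_iff intro!: exI[of _ 1])
qed

end

definition res2 :: "nat \<Rightarrow> padic2 \<Rightarrow> int" where
  "res2 n x = digits x n"

text \<open>The induced map f_n on Z/2^n Z, residues represented by integers in {0..<2^n}.\<close>
definition fmod :: "padic2 poly \<Rightarrow> nat \<Rightarrow> int \<Rightarrow> int" where
  "fmod f n r = res2 n (poly f (of_int r))"

definition is_cycle :: "padic2 poly \<Rightarrow> nat \<Rightarrow> nat \<Rightarrow> (nat \<Rightarrow> int) \<Rightarrow> bool" where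
  "is_cycle f n k x \<longleftrightarrow> k \<ge> 1 \<and> (\<forall>i<k. 0 \<le> x i \<and> x i < 2 ^ n) \<and> inj_on x {..<k} \<and>
     (\<forall>i<k. fmod f n (x i) = x (Suc i mod k))"

definition grows :: "padic2 poly \<Rightarrow> nat \<Rightarrow> nat \<Rightarrow> (nat \<Rightarrow> int) \<Rightarrow> bool" where
  "grows f n k x \<longleftrightarrow> (\<exists>y. is_cycle f (Suc n) (2 * k) y \<and>
     y ` {..<2 * k} = {z. 0 \<le> z \<and> z < 2 ^ Suc n \<and> z mod 2 ^ n \<in> x ` {..<k}})"

definition piter :: "padic2 poly \<Rightarrow> nat \<Rightarrow> padic2 poly" where
  "piter f k = ((\<lambda>p. pcompose f p) ^^ k) [:0, 1:]"

text \<open>Formal derivative of a polynomial (the library's pderiv needs a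
no-zero-divisors class instance; this is its coefficientwise definition).\<close>
definition fderiv :: "padic2 poly \<Rightarrow> padic2 poly" where
  "fderiv p = (\<Sum>i<degree p. monom (of_nat (Suc i) * coeff p (Suc i)) i)"

definition div2pow :: "padic2 \<Rightarrow> nat \<Rightarrow> padic2" where
  "div2pow a n = (THE b. 2 ^ n * b = a)"

end

theory Submission
  imports Defs
begin


lemma dig_compat: "digits a (Suc m) mod 2 ^ m = digits a m"
  using digits[of a] by simp

lemma dig_range: "0 \<le> digits a m \<and> digits a m < 2 ^ m"
proof -
  have "digits a m = digits a (Suc m) mod 2 ^ m" by (simp add: dig_compat)
  then show ?thesis by (simp add: pos_mod_sign pos_mod_bound)
qed

lemma dig_compat_add: "digits a (m + l) mod 2 ^ m = digits a m"
proof (induction l)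
  case 0
  then show ?case using dig_range[of a m] by simp
next
  case (Suc l)
  have "digits a (m + Suc l) mod 2 ^ m = (digits a (Suc (m + l)) mod 2 ^ (m + l)) mod 2 ^ m"
    by (simp add: mod_mod_cancel power_add)
  also have "\<dots> = digits a m" using Suc dig_compat by simp
  finally show ?case .
qed

lemma res2_range: "0 \<le> res2 m a \<and> res2 m a < 2 ^ m"
  by (simp add: res2_def dig_range)

lemma res2_add: "res2 m (a + b) = (res2 m a + res2 m b) mod 2 ^ m"
  by (simp add: res2_def plus_padic2.rep_eq)
lemma res2_diff: "res2 m (a - b) = (res2 m a - res2 m b) mod 2 ^ m"
  by (simp add: res2_def minus_padic2.rep_eq)
lemma res2_mult: "res2 m (a * b) = (res2 m a * res2 m b) mod 2 ^ m"
  by (simp add: res2_def times_padic2.rep_eq)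
lemma res2_uminus: "res2 m (- a) = (- res2 m a) mod 2 ^ m"
  by (simp add: res2_def uminus_padic2.rep_eq)
lemma res2_zero: "res2 m 0 = 0"
  by (simp add: res2_def zero_padic2.rep_eq)
lemma res2_one: "res2 m 1 = 1 mod 2 ^ m"
  by (simp add: res2_def one_padic2.rep_eq)

lemma res2_of_nat: "res2 m (of_nat n) = int n mod 2 ^ m"
proof (induction n)
  case 0 then show ?case by (simp add: res2_zero)
next
  case (Suc n)
  have "res2 m (of_nat (Suc n)) = res2 m (1 + of_nat n)" by simp
  also have "\<dots> = (1 mod 2^m + int n mod 2^m) mod 2^m" by (simp add: res2_add res2_one Suc)
  also have "\<dots> = int (Suc n) mod 2^m" by (simp add: mod_add_right_eq)
  finally show ?case .
qed

lemma res2_of_int: "res2 m (of_int r) = r mod 2 ^ m"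
proof (cases r rule: int_cases)
  case (nonneg n) then show ?thesis by (simp add: res2_of_nat)
next
  case (neg n)
  have "res2 m (of_int r) = res2 m (- of_nat (Suc n))" using neg by simp
  also have "\<dots> = (- (int (Suc n) mod 2^m)) mod 2^m" by (simp only: res2_uminus res2_of_nat)
  also have "\<dots> = r mod 2^m" using neg by (simp add: mod_minus_eq)
  finally show ?thesis .
qed

lemma res2_numeral: "res2 m (numeral w) = numeral w mod 2 ^ m"
  using res2_of_nat[of m "numeral w"] by simp

lemma res2_power: "res2 m (a ^ l) = (res2 m a) ^ l mod 2 ^ m"
proof (induction l)
  case 0 then show ?case by (simp add: res2_one)
next
  case (Suc l)
  then show ?case by (simp add: res2_mult mod_mult_right_eq)
qed

lemma res2_2pow: "res2 m ((2::padic2) ^ m) = 0"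
  by (simp add: res2_power res2_numeral power_mod)

lemma two_pow_dvd_imp: "(2::padic2) ^ m dvd c \<Longrightarrow> res2 m c = 0"
proof -
  assume "(2::padic2) ^ m dvd c"
  then obtain d where "c = 2 ^ m * d" by blast
  then show ?thesis by (simp add: res2_mult res2_2pow)
qed

lemma two_pow_dvd_if: assumes "res2 m c = 0" shows "(2::padic2) ^ m dvd c"
proof -
  define D where "D = digits c"
  have D0: "D m = 0" using assms by (simp add: D_def res2_def)
  have Ddiv: "D (j + m) mod 2 ^ m = 0" for j
    using dig_compat_add[of c m j] D0 by (simp add: D_def add.commute)
  define E where "E = (\<lambda>j. D (j + m) div 2 ^ m)"
  have DE: "D (j + m) = 2 ^ m * E j" for j
  proof -
    have "D (j + m) = 2 ^ m * (D (j + m) div 2 ^ m) + D (j + m) mod 2 ^ m"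
      by (rule mult_div_mod_eq[symmetric])
    then show ?thesis using Ddiv[of j] by (simp add: E_def)
  qed
  have Ecomp: "\<forall>j. E (Suc j) mod 2 ^ j = E j"
  proof
    fix j
    have "D (Suc (j + m)) mod 2 ^ (j + m) = D (j + m)"
      using dig_compat[of c "j + m"] by (simp add: D_def)
    then have "(2 ^ m * E (Suc j)) mod (2 ^ m * 2 ^ j) = 2 ^ m * E j"
      using DE[of j] DE[of "Suc j"] by (simp add: power_add mult.commute)
    then have "2 ^ m * (E (Suc j) mod 2 ^ j) = 2 ^ m * E j"
      by (simp only: mult_mod_right)
    then show "E (Suc j) mod 2 ^ j = E j" by simp
  qed
  define d where "d = Abs_padic2 E"
  have dd: "digits d = E" unfolding d_def using Ecomp by (simp add: Abs_padic2_inverse)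
  have "c = 2 ^ m * d"
  proof (rule digits_inject[THEN iffD1], rule ext)
    fix j
    have "digits (2 ^ m * d) j = res2 j (2 ^ m * d)" by (simp add: res2_def)
    also have "\<dots> = (res2 j (2 ^ m) * E j) mod 2 ^ j"
      by (simp only: res2_mult) (simp add: res2_def dd)
    also have "\<dots> = (2 ^ m mod 2 ^ j * E j) mod 2 ^ j"
      by (simp only: res2_power res2_numeral power_mod)
    also have "\<dots> = (2 ^ m * E j) mod 2 ^ j" by (simp add: mod_mult_left_eq)
    also have "\<dots> = D (j + m) mod 2 ^ j" by (simp add: DE)
    also have "\<dots> = D j" using dig_compat_add[of c j m] by (simp add: D_def)
    finally show "digits c j = digits (2 ^ m * d) j" by (simp add: D_def)
  qed
  then show ?thesis by simp
qed

lemma two_pow_dvd_iff: "(2::padic2) ^ m dvd c \<longleftrightarrow> res2 m c = 0"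
  using two_pow_dvd_imp two_pow_dvd_if by blast

lemma range_mod_eq: "0 \<le> (u::int) \<Longrightarrow> u < M \<Longrightarrow> 0 \<le> v \<Longrightarrow> v < M \<Longrightarrow> (u - v) mod M = 0 \<longleftrightarrow> u = v"
  by (metis mod_eq_dvd_iff mod_pos_pos_trivial dvd_eq_mod_eq_0)

lemma cong_iff: "(2::padic2) ^ m dvd (a - b) \<longleftrightarrow> res2 m a = res2 m b"
  using range_mod_eq[of "res2 m a" "2^m" "res2 m b"] res2_range[of m a] res2_range[of m b]
  by (simp add: two_pow_dvd_iff res2_diff)

lemma two_cancel: assumes "2 * (a::padic2) = 0" shows "a = 0"
proof -
  have "digits a j = 0" for j
  proof -
    have "res2 (Suc j) (2 * a) = 0" using assms by (simp add: res2_zero)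
    moreover have "res2 (Suc j) (2 * a) = (2 * digits a (Suc j)) mod 2 ^ Suc j"
      by (simp only: res2_mult res2_numeral) (simp add: res2_def mod_mult_left_eq)
    ultimately have "(2 * digits a (Suc j)) mod 2 ^ Suc j = 0" by simp
    then have "2 * 2 ^ j dvd 2 * digits a (Suc j)" by (simp add: dvd_eq_mod_eq_0)
    then have "2 ^ j dvd digits a (Suc j)" by simp
    then show ?thesis using dig_compat[of a j] by (simp add: dvd_eq_mod_eq_0)
  qed
  then have "digits a = digits 0" by (simp add: fun_eq_iff zero_padic2.rep_eq)
  then show ?thesis using digits_inject by blast
qed

lemma pow_cancel: "(2::padic2) ^ m * a = 0 \<Longrightarrow> a = 0"
proof (induction m arbitrary: a)
  case 0 then show ?case by simp
next
  case (Suc m)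
  then have "2 ^ m * (2 * a) = 0" by (simp add: mult.assoc mult.left_commute)
  then have "2 * a = 0" using Suc.IH by blast
  then show ?case by (rule two_cancel)
qed

lemma pow_cancel_eq: "(2::padic2) ^ m * a = 2 ^ m * b \<Longrightarrow> a = b"
  using pow_cancel[of m "a - b"] by (simp add: right_diff_distrib)

lemma div2pow_eq: "(2::padic2) ^ m * b = a \<Longrightarrow> div2pow a m = b"
  unfolding div2pow_def by (rule the_equality) (auto intro: pow_cancel_eq)



lemma poly_diff_dvd: "(a - b) dvd (poly p a - poly p (b::'a::comm_ring_1))"
proof (induction p)
  case 0 then show ?case by simp
next
  case (pCons c p)
  have "poly (pCons c p) a - poly (pCons c p) b = a * (poly p a - poly p b) + (a - b) * poly p b"
    by (simp add: algebra_simps)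
  then show ?case using pCons.IH by simp
qed

lemma res2_poly_cong: "res2 m a = res2 m b \<Longrightarrow> res2 m (poly p a) = res2 m (poly p b)"
  using poly_diff_dvd[of a b p] cong_iff[of m a b] cong_iff[of m "poly p a" "poly p b"]
  by (meson dvd_trans)

lemma poly_piter: "poly (piter f j) z = (poly f ^^ j) z"
  by (induction j) (simp_all add: piter_def poly_pcompose)

lemma diff3_eq: "a - b - c = d \<Longrightarrow> a = b + c + (d::'a::ab_group_add)"
  by (simp add: algebra_simps)

lemma monom_taylor: "h ^ 2 dvd ((x + h) ^ Suc i - x ^ Suc i - of_nat (Suc i) * h * x ^ i :: 'a::comm_ring_1)"
proof (induction i)
  case 0 then show ?case by simp
next
  case (Suc i)
  then obtain r where r0: "(x + h) ^ Suc i - x ^ Suc i - of_nat (Suc i) * h * x ^ i = h ^ 2 * r"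
    by (auto elim: dvdE)
  have r: "(x + h) ^ Suc i = x ^ Suc i + of_nat (Suc i) * h * x ^ i + h ^ 2 * r"
    using diff3_eq[OF r0] .
  have "(x + h) ^ Suc (Suc i) - x ^ Suc (Suc i) - of_nat (Suc (Suc i)) * h * x ^ Suc i
     = h ^ 2 * (x * r + of_nat (Suc i) * x ^ i + h * r)"
    by (simp only: power_Suc[of "x + h" "Suc i"] r) (simp add: algebra_simps power2_eq_square)
  then show ?case by simp
qed

lemma fderiv_eval: "poly (fderiv p) x = (\<Sum>i<degree p. of_nat (Suc i) * coeff p (Suc i) * x ^ i)"
  by (simp add: fderiv_def poly_sum poly_monom)

lemma taylor: "h ^ 2 dvd (poly p (x + h) - poly p x - h * poly (fderiv p) x)"
proof (cases "degree p")
  case 0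
  then show ?thesis by (simp add: fderiv_eval) (simp add: poly_altdef)
next
  case (Suc d)
  have "poly p (x + h) - poly p x - h * poly (fderiv p) x =
    (\<Sum>i<Suc d. coeff p (Suc i) * ((x + h) ^ Suc i - x ^ Suc i - of_nat (Suc i) * h * x ^ i))"
  proof -
    have e1: "poly p y = coeff p 0 + (\<Sum>i<Suc d. coeff p (Suc i) * y ^ Suc i)" for y
      unfolding poly_altdef Suc sum.atMost_Suc_shift lessThan_Suc_atMost by simp
    show ?thesis
      by (simp add: e1 fderiv_eval Suc sum_distrib_left algebra_simps sum_subtractf sum.distrib)
  qed
  also have "h ^ 2 dvd \<dots>"
    by (rule dvd_sum) (rule dvd_mult, rule monom_taylor)
  finally show ?thesis .
qed


lemma taylor_obt: "\<exists>r. poly p (x + h) = poly p x + h * poly (fderiv p) x + h ^ 2 * r"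
  using taylor[of h p x] diff3_eq by (metis dvdE)

lemma poly_diff_obt: "\<exists>s. poly p a = poly p b + (a - b) * (s::'a::comm_ring_1)"
proof -
  obtain s where "poly p a - poly p b = (a - b) * s" using poly_diff_dvd[of a b p] by (auto elim: dvdE)
  then show ?thesis by (metis add.commute diff_add_cancel)
qed

lemma parity: "2 dvd (a::padic2) \<or> 2 dvd a - 1"
proof -
  have r: "res2 1 a = 0 \<or> res2 1 a = 1" using res2_range[of 1 a] by auto
  have "res2 1 (0::padic2) = 0" "res2 1 (1::padic2) = 1" by (simp_all add: res2_zero res2_one)
  then show ?thesis using r cong_iff[of 1 a 0] cong_iff[of 1 a 1] by auto
qed

lemma cyc_iter:
  assumes "is_cycle f m K c" "i < K" "res2 m Z = c i"
  shows "res2 m ((poly f ^^ s) Z) = c ((i + s) mod K)"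
proof (induction s)
  case 0 then show ?case using assms by simp
next
  case (Suc s)
  define j where "j = (i + s) mod K"
  have K: "K \<ge> 1" using assms(1) by (simp add: is_cycle_def)
  have j: "j < K" using K by (simp add: j_def)
  have cj: "0 \<le> c j \<and> c j < 2 ^ m" using assms(1) j by (simp add: is_cycle_def)
  have "res2 m (of_int (c j)) = c j" using cj by (simp add: res2_of_int)
  then have hj: "res2 m ((poly f ^^ s) Z) = res2 m (of_int (c j))" using Suc j_def by simp
  have "res2 m ((poly f ^^ Suc s) Z) = res2 m (poly f (of_int (c j)))"
    using res2_poly_cong[OF hj, of f] by simp
  also have "\<dots> = c (Suc j mod K)" using assms(1) j by (simp add: is_cycle_def fmod_def)
  also have "Suc j mod K = (i + Suc s) mod K" by (simp add: j_def mod_Suc_eq)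
  finally show ?case .
qed

lemma mod_ne: "j < 2 * k \<Longrightarrow> 1 \<le> (k::nat) \<Longrightarrow> (j + k) mod (2 * k) \<noteq> j"
proof (cases "j + k < 2 * k")
  case True then show ?thesis by simp
next
  case False
  assume a: "j < 2 * k" "1 \<le> k"
  then have "(j + k) mod (2 * k) = j + k - 2 * k" using False
    by (simp add: mod_if)
  then show ?thesis using a False by simp
qed



theorem lemma3p4:
  fixes f :: "padic2 poly" and n k :: nat and x :: "nat \<Rightarrow> int" and X :: "nat \<Rightarrow> padic2"
  assumes "n \<ge> 2"
    and "is_cycle f n k x"
    and "grows f n k x"
    and "\<forall>i<k. res2 n (X i) = x i"
  shows "\<forall>i<k. \<forall>t\<in>{0::nat, 1}.
    (let a_n = (\<lambda>z. poly (fderiv (piter f k)) z);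
         b_n = (\<lambda>z. div2pow (poly (piter f k) z - z) n);
         a_n1 = (\<lambda>z. poly (fderiv (piter f (2 * k))) z);
         b_n1 = (\<lambda>z. div2pow (poly (piter f (2 * k)) z - z) (Suc n))
     in (4 dvd (a_n1 (X i) - 1)) \<and>
        (4 dvd (2 * b_n1 (X i + 2 ^ n * of_nat t) - b_n (X i) * (1 + a_n (X i)))))"
proof (intro allI impI ballI)
  fix i t assume i: "i < k" and t: "t \<in> {0::nat, 1}"
  define g where "g = (poly f ^^ k)"
  define g' where "g' = poly (fderiv (piter f k))"
  define G' where "G' = poly (fderiv (piter f (2 * k)))"
  define z0 where "z0 = X i"
  obtain m0 where n: "n = m0 + 2" using assms(1) by (metis add.commute le_add_diff_inverse)
  define h :: padic2 where "h = 2 ^ n"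
  define q :: padic2 where "q = 2 ^ m0"
  have h4: "h = 4 * q" by (simp add: h_def q_def n power_add)
  have h2: "(2::padic2) ^ Suc n = 2 * h" by (simp add: h_def)
  have pg: "poly (piter f k) z = g z" for z by (simp add: poly_piter g_def)
  have pG: "poly (piter f (2 * k)) z = g (g z)" for z
    by (simp add: poly_piter g_def mult_2 funpow_add)
  have cyc: "is_cycle f n k x" by (rule assms(2))
  have k1: "k \<ge> 1" using cyc by (simp add: is_cycle_def)
  have z0r: "res2 n z0 = x i" using assms(4) i by (simp add: z0_def)
  have "res2 n (g z0) = x ((i + k) mod k)" unfolding g_def by (rule cyc_iter[OF cyc i z0r])
  then have "res2 n (g z0) = res2 n z0" using i z0r by simp
  then have "h dvd g z0 - z0" using cong_iff h_def by blast
  then obtain B where B: "g z0 - z0 = h * B" by (auto elim: dvdE)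
  have bn: "div2pow (g z0 - z0) n = B" using B by (simp add: div2pow_eq h_def)
  \<comment> \<open>growth: no lift is fixed by g modulo 2^(n+1)\<close>
  have nofix: "\<not> (2::padic2) ^ Suc n dvd (g w - w)" if w: "w = z0 + h * of_nat tt" for w tt
  proof
    assume dv: "(2::padic2) ^ Suc n dvd (g w - w)"
    obtain y where ycyc: "is_cycle f (Suc n) (2 * k) y" and yimg:
      "y ` {..<2 * k} = {z. 0 \<le> z \<and> z < 2 ^ Suc n \<and> z mod 2 ^ n \<in> x ` {..<k}}"
      using assms(3) by (auto simp: grows_def)
    define wr where "wr = res2 (Suc n) w"
    have "wr mod 2 ^ n = res2 n w" by (simp add: wr_def res2_def dig_compat)
    also have "res2 n w = res2 n z0"
      using cong_iff[of n w z0] w by (simp add: h_def)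
    finally have "wr mod 2 ^ n = x i" using z0r by simp
    then have "wr \<in> y ` {..<2 * k}" using yimg res2_range[of "Suc n" w] i
      by (auto simp: wr_def)
    then obtain j where j: "j < 2 * k" "y j = wr" by auto
    have "res2 (Suc n) (g w) = y ((j + k) mod (2 * k))"
      unfolding g_def by (rule cyc_iter[OF ycyc j(1)]) (simp add: j wr_def)
    moreover have "res2 (Suc n) (g w) = res2 (Suc n) w" using dv cong_iff by blast
    ultimately have "y ((j + k) mod (2 * k)) = y j" using j by (simp add: wr_def)
    moreover have "(j + k) mod (2 * k) < 2 * k" using k1 by simp
    ultimately have "(j + k) mod (2 * k) = j"
      using ycyc j(1) by (auto simp: is_cycle_def inj_on_def)
    then show False using mod_ne j(1) k1 by blast
  qed
  have odd: "2 dvd g' z0 - 1"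
  proof (rule ccontr)
    assume no: "\<not> 2 dvd g' z0 - 1"
    then obtain c where c: "g' z0 = 2 * c" using parity by (auto elim: dvdE)
    obtain r where r: "g (z0 + h) = g z0 + h * g' z0 + h ^ 2 * r"
      using taylor_obt[of "piter f k" z0 h] by (auto simp: pg g'_def)
    show False
    proof (cases "2 dvd B")
      case True
      then obtain b where "B = 2 * b" by (auto elim: dvdE)
      then have "g z0 - z0 = 2 ^ Suc n * b" using B h2 by simp
      then show False using nofix[of z0 0] by simp
    next
      case False
      then obtain b where b: "B - 1 = 2 * b" using parity by (auto elim: dvdE)
      have "g (z0 + h) - (z0 + h) = 2 ^ Suc n * (b + c + 2 * q * r)"
      proof -
        have "g (z0 + h) - (z0 + h) = (g z0 - z0) + h * g' z0 + h ^ 2 * r - h" using r by simp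
        also have "\<dots> = h * (1 + 2 * b) + h * (2 * c) + h ^ 2 * r - h"
        proof -
          have "B = 1 + 2 * b" using b by (simp add: diff_eq_eq add.commute)
          then show ?thesis using B c by simp
        qed
        also have "\<dots> = 2 ^ Suc n * (b + c + 2 * q * r)"
          unfolding h2 by (simp add: h4 algebra_simps power2_eq_square)
        finally show ?thesis .
      qed
      then show False using nofix[of "z0 + h" 1] by simp
    qed
  qed
  then obtain e0 where "g' z0 - 1 = 2 * e0" by (auto elim: dvdE)
  then obtain e where e: "g' z0 = 1 + 2 * e" by (metis diff_eq_eq add.commute)
  have claim1: "4 dvd (G' z0 - 1)"
  proof -
    obtain r0 where r0: "g (g (z0 + 4)) = g (g z0) + 4 * G' z0 + 4 ^ 2 * r0"
      using taylor_obt[of "piter f (2 * k)" z0 4] by (auto simp: pG G'_def)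
    obtain r1 where r1: "g (z0 + 4) = g z0 + 4 * g' z0 + 4 ^ 2 * r1"
      using taylor_obt[of "piter f k" z0 4] by (auto simp: pg g'_def)
    define u where "u = g' z0 + 4 * r1"
    define Y where "Y = g z0"
    have r1': "g (z0 + 4) = Y + 4 * u" using r1 by (simp add: u_def Y_def algebra_simps power2_eq_square)
    obtain r2 where r2: "g (Y + 4 * u) = g Y + 4 * u * g' Y + (4 * u) ^ 2 * r2"
      using taylor_obt[of "piter f k" Y "4 * u"] by (auto simp: pg g'_def)
    obtain s0 where s0: "g' Y = g' z0 + (Y - z0) * s0"
      using poly_diff_obt[of "fderiv (piter f k)" Y z0] by (auto simp: g'_def)
    have s: "g' Y = g' z0 + 4 * (q * B * s0)" using s0 B h4 by (simp add: Y_def)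
    have "4 * G' z0 = 4 * (u * g' Y + 4 * u ^ 2 * r2 - 4 * r0)"
      using r0 r1' r2 by (simp add: Y_def algebra_simps power2_eq_square)
    then have "G' z0 = u * g' Y + 4 * u ^ 2 * r2 - 4 * r0"
      using pow_cancel_eq[of 2 "G' z0" "u * g' Y + 4 * u ^ 2 * r2 - 4 * r0"] by simp
    then have "G' z0 - 1 = 4 * (e + e * e + r1 * (1 + 2 * e + 4 * (q * B * s0)) + (q * B * s0) * (1 + 2 * e)
        + u ^ 2 * r2 - r0)"
      using s e by (simp add: u_def algebra_simps)
    then show ?thesis by simp
  qed
  define T :: padic2 where "T = of_nat t"
  define y where "y = z0 + h * T"
  define Y where "Y = g y"
  obtain r where r: "Y = g z0 + h * T * g' z0 + (h * T) ^ 2 * r"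
    using taylor_obt[of "piter f k" z0 "h * T"] by (auto simp: pg g'_def Y_def y_def)
  define By where "By = B + T * (g' z0 - 1) + h * T ^ 2 * r"
  have gy: "Y = y + h * By"
  proof -
    have "g z0 = z0 + h * B" using B by (metis diff_eq_eq add.commute)
    then show ?thesis using r by (simp add: By_def y_def algebra_simps power2_eq_square)
  qed
  obtain s1 where s1: "g' y = g' z0 + (y - z0) * s1"
    using poly_diff_obt[of "fderiv (piter f k)" y z0] by (auto simp: g'_def)
  have s1': "g' y = 1 + 2 * e + h * T * s1" using s1 e by (simp add: y_def)
  obtain r' where r': "g (y + h * By) = g y + h * By * g' y + (h * By) ^ 2 * r'"
    using taylor_obt[of "piter f k" y "h * By"] by (auto simp: pg g'_def)
  define C where "C = By * (1 + e + 2 * q * T * s1) + 2 * q * By ^ 2 * r'"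
  have GC: "g (g y) - y = 2 ^ Suc n * C"
  proof -
    have "g (g y) - y = h * By + h * By * g' y + (h * By) ^ 2 * r'"
      using r' gy by (simp add: Y_def)
    also have "\<dots> = 2 ^ Suc n * C"
      unfolding h2 s1' C_def by (simp add: h4 algebra_simps power2_eq_square)
    finally show ?thesis .
  qed
  have bn1: "div2pow (g (g y) - y) (Suc n) = C" using GC by (simp add: div2pow_eq)
  have claim2: "4 dvd (2 * C - B * (1 + g' z0))"
  proof -
    have "2 * C - B * (1 + g' z0) = 4 * (q * B * T * s1 + e * T * (1 + e + 2 * q * T * s1)
       + 2 * q * T ^ 2 * r * (1 + e + 2 * q * T * s1) + q * By ^ 2 * r')"
      unfolding C_def By_def e h4 by (simp add: algebra_simps power2_eq_square)
    then show ?thesis by (metis dvd_triv_left)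
  qed
  show "let a_n = (\<lambda>z. poly (fderiv (piter f k)) z);
         b_n = (\<lambda>z. div2pow (poly (piter f k) z - z) n);
         a_n1 = (\<lambda>z. poly (fderiv (piter f (2 * k))) z);
         b_n1 = (\<lambda>z. div2pow (poly (piter f (2 * k)) z - z) (Suc n))
     in (4 dvd (a_n1 (X i) - 1)) \<and>
        (4 dvd (2 * b_n1 (X i + 2 ^ n * of_nat t) - b_n (X i) * (1 + a_n (X i))))"
    unfolding Let_def
    using claim1 claim2 bn bn1
    by (simp add: pg pG G'_def g'_def z0_def y_def h_def T_def)
qed

end
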